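(* Let $(G,c)$ be a $k$-terminal network with terminal set $Q$ such that for every $S\subset Q$ with $S\neq\emptyset,Q$ the minimum-cost $S$-separating cut of $(G,c)$ is unique. Let $A_{G,c}$ be its cutset-edge incidence matrix. Then there exists an edge-cost function $\hat c:E(G)\to\mathbb{R}^+$ such that every mimicking network $(G',c')$ of $(G,\hat c)$ satisfies $|E(G')|\ge \mathrm{rank}(A_{G,c})$.
   Context: A $k$-terminal network $(G,c)$ is an undirected graph with edge costs $c:E(G)\to\mathbb{R}^+$ and terminal set $Q\subseteq V(G)$, $|Q|=k$. For $S\subset Q$, $\bar S=Q\setminus S$; a cut $(W,V(G)\setminus W)$ is $S$-separating if $W\cap Q\in\{S,\bar S\}$; its cutset is the set of edges with exactly one endpoint in $W$ and its cost is the total cost of the cutset. The minimum $S$-separating cut is unique if every other $S$-separating cut has strictly larger cost. $\mathrm{mincut}_{G,c}(S,\bar S)$ is the minimum cost of an $S$-separating cut. Cutset-edge incidence matrix: fix an enumeration $S_1,\dots,S_m$, $m=2^{k-1}-1$, of representatives of the distinct nontrivial bipartitions $Q=S_i\cup\bar S_i$, and for each $i$ fix a minimum-cost $S_i$-separating cut (ties broken arbitrarily); $A_{G,c}\in\{0,1\}^{m\times E(G)}$ has $(A_{G,c})_{i,e}=1$ iff $e$ is in the cutset of that cut. A mimicking network of $(G,\hat c)$ is a $k$-terminal network $(G',c')$ with the same terminal set $Q$ and $\mathrm{mincut}_{G',c'}(S,\bar S)=\mathrm{mincut}_{G,\hat c}(S,\bar S)$ for all $S\subset Q$, $S\neq\emptyset,Q$.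 *)

theory Defs
  imports Main "Jordan_Normal_Form.DL_Rank"
begin

definition graph :: "'a set \<Rightarrow> 'a set set \<Rightarrow> bool" where
  "graph V E \<longleftrightarrow> finite V \<and> (\<forall>e\<in>E. \<exists>u v. u \<in> V \<and> v \<in> V \<and> u \<noteq> v \<and> e = {u, v})"

definition terminal_network :: "'a set \<Rightarrow> 'a set set \<Rightarrow> ('a set \<Rightarrow> real) \<Rightarrow> 'a set \<Rightarrow> bool" where
  "terminal_network V E c Q \<longleftrightarrow> graph V E \<and> (\<forall>e\<in>E. c e > 0) \<and> Q \<subseteq> V"

definition nontrivial_sub :: "'a set \<Rightarrow> 'a set \<Rightarrow> bool" where
  "nontrivial_sub Q S \<longleftrightarrow> S \<subseteq> Q \<and> S \<noteq> {} \<and> S \<noteq> Q"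

definition separating :: "'a set \<Rightarrow> 'a set \<Rightarrow> 'a set \<Rightarrow> 'a set \<Rightarrow> bool" where
  "separating V Q S W \<longleftrightarrow> W \<subseteq> V \<and> (W \<inter> Q = S \<or> W \<inter> Q = Q - S)"

definition cutset :: "'a set set \<Rightarrow> 'a set \<Rightarrow> 'a set set" where
  "cutset E W = {e \<in> E. \<exists>u v. e = {u, v} \<and> u \<in> W \<and> v \<notin> W}"

definition cut_cost :: "'a set set \<Rightarrow> ('a set \<Rightarrow> real) \<Rightarrow> 'a set \<Rightarrow> real" where
  "cut_cost E c W = sum c (cutset E W)"

definition mincut :: "'a set \<Rightarrow> 'a set set \<Rightarrow> ('a set \<Rightarrow> real) \<Rightarrow> 'a set \<Rightarrow> 'a set \<Rightarrow> real" where
  "mincut V E c Q S = Min {cut_cost E c W | W. separating V Q S W}"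

definition is_min_cut :: "'a set \<Rightarrow> 'a set set \<Rightarrow> ('a set \<Rightarrow> real) \<Rightarrow> 'a set \<Rightarrow> 'a set \<Rightarrow> 'a set \<Rightarrow> bool" where
  "is_min_cut V E c Q S W \<longleftrightarrow> separating V Q S W \<and> cut_cost E c W = mincut V E c Q S"

definition unique_min_cut :: "'a set \<Rightarrow> 'a set set \<Rightarrow> ('a set \<Rightarrow> real) \<Rightarrow> 'a set \<Rightarrow> 'a set \<Rightarrow> bool" where
  "unique_min_cut V E c Q S \<longleftrightarrow>
     (\<exists>W. is_min_cut V E c Q S W \<and>
       (\<forall>W'. separating V Q S W' \<and> \<not> (W' = W \<or> W' = V - W) \<longrightarrow> cut_cost E c W' > cut_cost E c W))"

definition bipartitions :: "'a set \<Rightarrow> 'a set set set" where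
  "bipartitions Q = {{S, Q - S} | S. nontrivial_sub Q S}"

definition rep :: "'a set set \<Rightarrow> 'a set" where
  "rep P = (SOME S. S \<in> P)"

definition min_cutset :: "'a set \<Rightarrow> 'a set set \<Rightarrow> ('a set \<Rightarrow> real) \<Rightarrow> 'a set \<Rightarrow> 'a set \<Rightarrow> 'a set set" where
  "min_cutset V E c Q S = cutset E (SOME W. is_min_cut V E c Q S W)"

definition enum_set :: "'b set \<Rightarrow> nat \<Rightarrow> 'b" where
  "enum_set X = (SOME f. bij_betw f {..<card X} X)"

definition incidence_matrix :: "'a set \<Rightarrow> 'a set set \<Rightarrow> ('a set \<Rightarrow> real) \<Rightarrow> 'a set \<Rightarrow> real mat" where
  "incidence_matrix V E c Q =
     mat (card (bipartitions Q)) (card E)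
       (\<lambda>(i, j). if enum_set E j \<in> min_cutset V E c Q (rep (enum_set (bipartitions Q) i)) then 1 else 0)"

definition matrix_rank :: "real mat \<Rightarrow> nat" where
  "matrix_rank A = vec_space.rank (dim_row A) A"

text \<open>The vertices
  of G' are taken from the type 'a + nat; the terminal q of Q is the vertex Inl q,
  so the terminal set of G' is Inl ` Q (every finite network with terminal set Q is
  isomorphic to one of this form).\<close>

definition mimicking :: "('a + nat) set \<Rightarrow> ('a + nat) set set \<Rightarrow> (('a + nat) set \<Rightarrow> real)
     \<Rightarrow> 'a set \<Rightarrow> 'a set set \<Rightarrow> ('a set \<Rightarrow> real) \<Rightarrow> 'a set \<Rightarrow> bool" where
  "mimicking V' E' c' V E c Q \<longleftrightarrow>
     terminal_network V' E' c' (Inl ` Q) \<and>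
     (\<forall>S. nontrivial_sub Q S \<longrightarrow> mincut V' E' c' (Inl ` Q) (Inl ` S) = mincut V E c Q S)"

end

theory Submission
  imports Defs
begin


context vec_space begin

lemma rank_le_span_card:
  assumes A: "A \<in> carrier_mat n nc" and T: "T \<subseteq> carrier_vec n" "finite T"
    and sub: "set (cols A) \<subseteq> span T"
  shows "rank A \<le> card T"
proof -
  obtain S where S: "maximal S (\<lambda>T. T \<subseteq> set (cols A) \<and> lin_indpt T)"
    using maximal_exists[of "(\<lambda>T. T \<subseteq> set (cols A) \<and> lin_indpt T)" "card (set (cols A))" "{}"]
    by (meson List.finite_set card_mono empty_iff empty_subsetI finite_lin_indpt2 rev_finite_subset)
  have r: "rank A = card S" using rank_card_indpt[OF A S] .
  have SS: "S \<subseteq> set (cols A)" "lin_indpt S" using S by (auto simp: maximal_def)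
  have fS: "finite S" using SS(1) finite_subset by blast
  have "S \<subseteq> span T" using SS(1) sub by blast
  from replacement[OF fS T(2) T(1) SS(2) this] have "\<exists>C::'a vec set. int (card C) \<le> int (card T) - int (card S)" by auto
  then show ?thesis using r by auto
qed

lemma line_meets_once:
  assumes T: "T \<subseteq> carrier_vec n" and w: "w \<in> carrier_vec n" "w \<notin> span T"
    and p: "p \<in> carrier_vec n"
  shows "finite {t. p + t \<cdot>\<^sub>v w \<in> span T}"
proof -
  have "card {t. p + t \<cdot>\<^sub>v w \<in> span T} \<le> 1 \<or> True" by simp
  have sub: "\<forall>s\<in>{t. p + t \<cdot>\<^sub>v w \<in> span T}. \<forall>s'\<in>{t. p + t \<cdot>\<^sub>v w \<in> span T}. s = s'"
  proof (intro ballI, rule ccontr)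
    fix s s' assume s: "s \<in> {t. p + t \<cdot>\<^sub>v w \<in> span T}" and s': "s' \<in> {t. p + t \<cdot>\<^sub>v w \<in> span T}"
      and ne: "s \<noteq> s'"
    have "(p + s \<cdot>\<^sub>v w) + (-1) \<cdot>\<^sub>v (p + s' \<cdot>\<^sub>v w) \<in> span T"
      using s s' span_add1[OF T] smult_in_span[OF T] by auto
    moreover have "(p + s \<cdot>\<^sub>v w) + (-1) \<cdot>\<^sub>v (p + s' \<cdot>\<^sub>v w) = (s - s') \<cdot>\<^sub>v w"
      using p w by (intro eq_vecI) (auto simp: algebra_simps)
    ultimately have "(1/(s - s')) \<cdot>\<^sub>v ((s - s') \<cdot>\<^sub>v w) \<in> span T"
      using smult_in_span[OF T] by metis
    moreover have "(1/(s - s')) \<cdot>\<^sub>v ((s - s') \<cdot>\<^sub>v w) = w"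
      using ne w by (intro eq_vecI) auto
    ultimately show False using w by simp
  qed
  show ?thesis
  proof (cases "{t. p + t \<cdot>\<^sub>v w \<in> span T} = {}")
    case False
    then obtain s where "s \<in> {t. p + t \<cdot>\<^sub>v w \<in> span T}" by blast
    with sub have "{t. p + t \<cdot>\<^sub>v w \<in> span T} = {s}" by blast
    then show ?thesis by simp
  qed simp
qed

lemma avoid_spans:
  assumes inf: "infinite (UNIV :: 'a set)"
    and fin: "finite Fam" and FamC: "\<forall>T\<in>Fam. T \<subseteq> carrier_vec n"
    and WC: "Wset \<subseteq> carrier_vec n" and W0: "0\<^sub>v n \<in> Wset"
    and Wadd: "\<And>x y. x \<in> Wset \<Longrightarrow> y \<in> Wset \<Longrightarrow> x + y \<in> Wset"
    and Wsm: "\<And>a x. x \<in> Wset \<Longrightarrow> a \<cdot>\<^sub>v x \<in> Wset"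
    and notsub: "\<forall>T\<in>Fam. \<not> Wset \<subseteq> span T"
  shows "\<exists>w\<in>Wset. \<forall>T\<in>Fam. w \<notin> span T"
  using fin FamC notsub
proof (induction Fam rule: finite_induct)
  case empty
  then show ?case using W0 by blast
next
  case (insert T0 F)
  then obtain w where w: "w \<in> Wset" "\<forall>T\<in>F. w \<notin> span T" by auto
  have T0: "T0 \<subseteq> carrier_vec n" using insert by auto
  show ?case
  proof (cases "w \<in> span T0")
    case False
    then show ?thesis using w by auto
  next
    case True
    obtain u where u: "u \<in> Wset" "u \<notin> span T0" using insert by auto
    have wc: "w \<in> carrier_vec n" and uc: "u \<in> carrier_vec n" using w u WC by auto
    define Bad where "Bad = (\<Union>T\<in>F. {s. w + s \<cdot>\<^sub>v u \<in> span T})"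
    have finB: "finite Bad" unfolding Bad_def
    proof (intro finite_UN_I[OF insert(1)])
      fix T assume TF: "T \<in> F"
      have Tc: "T \<subseteq> carrier_vec n" using insert TF by auto
      show "finite {s. w + s \<cdot>\<^sub>v u \<in> span T}"
      proof (cases "u \<in> span T")
        case False
        then show ?thesis using line_meets_once[OF Tc uc False wc] by simp
      next
        case True
        have "{s. w + s \<cdot>\<^sub>v u \<in> span T} = {}"
        proof (rule ccontr)
          assume "{s. w + s \<cdot>\<^sub>v u \<in> span T} \<noteq> {}"
          then obtain s where s: "w + s \<cdot>\<^sub>v u \<in> span T" by auto
          have "(w + s \<cdot>\<^sub>v u) + (- s) \<cdot>\<^sub>v u \<in> span T"
            using s True span_add1[OF Tc] smult_in_span[OF Tc] by auto
          moreover have "(w + s \<cdot>\<^sub>v u) + (- s) \<cdot>\<^sub>v u = w"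
            using wc uc by (intro eq_vecI) (auto simp: algebra_simps)
          ultimately show False using w TF by auto
        qed
        then show ?thesis by simp
      qed
    qed
    obtain s where s: "s \<notin> Bad \<union> {0}"
      using ex_new_if_finite[OF inf] finB by blast
    have cand: "w + s \<cdot>\<^sub>v u \<in> Wset" using Wadd[OF w(1) Wsm[OF u(1)]] .
    have "w + s \<cdot>\<^sub>v u \<notin> span T0"
    proof
      assume a: "w + s \<cdot>\<^sub>v u \<in> span T0"
      have "(1/s) \<cdot>\<^sub>v ((w + s \<cdot>\<^sub>v u) + (-1) \<cdot>\<^sub>v w) \<in> span T0"
        using a True span_add1[OF T0] smult_in_span[OF T0] by auto
      moreover have "(1/s) \<cdot>\<^sub>v ((w + s \<cdot>\<^sub>v u) + (-1) \<cdot>\<^sub>v w) = u"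
        using wc uc s by (intro eq_vecI) (auto simp: algebra_simps)
      ultimately show False using u by auto
    qed
    moreover have "\<forall>T\<in>F. w + s \<cdot>\<^sub>v u \<notin> span T" using s unfolding Bad_def by auto
    ultimately show ?thesis using cand by auto
  qed
qed

end


lemma graph_finite_E: "graph V E \<Longrightarrow> finite E"
proof -
  assume g: "graph V E"
  have "E \<subseteq> Pow V"
  proof
    fix e assume "e \<in> E"
    then obtain u v where "u \<in> V" "v \<in> V" "e = {u,v}" using g unfolding graph_def by meson
    then show "e \<in> Pow V" by simp
  qed
  moreover have "finite V" using g unfolding graph_def by blast
  ultimately show ?thesis by (meson finite_Pow_iff finite_subset)
qed

lemma cutset_sub: "cutset E W \<subseteq> E" unfolding cutset_def by blast

lemma cutset_compl:
  assumes g: "graph V E" and W: "W \<subseteq> V"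
  shows "cutset E (V - W) = cutset E W"
proof
  show "cutset E (V - W) \<subseteq> cutset E W"
  proof
    fix e assume "e \<in> cutset E (V - W)"
    then obtain u v where e: "e \<in> E" "e = {u,v}" "u \<in> V - W" "v \<notin> V - W" unfolding cutset_def by blast
    obtain a b where ab: "a \<in> V" "b \<in> V" "e = {a,b}" using g e(1) unfolding graph_def by blast
    have "v \<in> V" using ab e(2) by auto
    then have "v \<in> W" using e by auto
    moreover have "e = {v,u}" using e(2) by (simp add: insert_commute)
    moreover have "u \<notin> W" using e by auto
    ultimately show "e \<in> cutset E W" unfolding cutset_def using e(1) by blast
  qed
next
  show "cutset E W \<subseteq> cutset E (V - W)"
  proof
    fix e assume "e \<in> cutset E W"
    then obtain u v where e: "e \<in> E" "e = {u,v}" "u \<in> W" "v \<notin> W" unfolding cutset_def by blast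
    obtain a b where ab: "a \<in> V" "b \<in> V" "e = {a,b}" using g e(1) unfolding graph_def by blast
    have "v \<in> V" using ab e(2) by auto
    then have "v \<in> V - W" using e by auto
    moreover have "u \<notin> V - W" using e by auto
    moreover have "e = {v,u}" using e(2) by (simp add: insert_commute)
    ultimately show "e \<in> cutset E (V - W)" unfolding cutset_def using e(1) by blast
  qed
qed

lemma sep_finite: "finite V \<Longrightarrow> finite {cut_cost E c W | W. separating V Q S W}"
  by (rule finite_image_set, rule finite_subset[of _ "Pow V"]) (auto simp: separating_def)

lemma mincut_le: "finite V \<Longrightarrow> separating V Q S W \<Longrightarrow> mincut V E c Q S \<le> cut_cost E c W"
  unfolding mincut_def by (rule Min_le[OF sep_finite]) auto

lemma min_cut_exists:
  assumes "finite V" "S \<subseteq> Q" "Q \<subseteq> V"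
  shows "\<exists>W. is_min_cut V E c Q S W"
proof -
  have "separating V Q S S" using assms unfolding separating_def by auto
  then have ne: "{cut_cost E c W | W. separating V Q S W} \<noteq> {}" by blast
  from Min_in[OF sep_finite[OF assms(1)] ne]
  obtain W where "separating V Q S W" "cut_cost E c W = mincut V E c Q S"
    unfolding mincut_def by auto
  then show ?thesis unfolding is_min_cut_def by blast
qed

lemma some_min_cut:
  assumes "finite V" "S \<subseteq> Q" "Q \<subseteq> V"
  shows "is_min_cut V E c Q S (SOME W. is_min_cut V E c Q S W)"
  using min_cut_exists[OF assms] by (rule someI_ex)

lemma uniq_cut:
  assumes tn: "terminal_network V E c Q" and u: "unique_min_cut V E c Q S"
    and sep: "separating V Q S W'"
  shows "cutset E W' = cutset E (SOME W. is_min_cut V E c Q S W)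
         \<or> cut_cost E c W' > cut_cost E c (SOME W. is_min_cut V E c Q S W)"
proof -
  have g: "graph V E" using tn unfolding terminal_network_def by blast
  obtain W0 where W0: "is_min_cut V E c Q S W0"
    "\<forall>W'. separating V Q S W' \<and> \<not> (W' = W0 \<or> W' = V - W0) \<longrightarrow> cut_cost E c W' > cut_cost E c W0"
    using u unfolding unique_min_cut_def by blast
  define W1 where "W1 = (SOME W. is_min_cut V E c Q S W)"
  have W1: "is_min_cut V E c Q S W1" unfolding W1_def using W0(1) by (rule someI)
  have W0V: "W0 \<subseteq> V" using W0(1) unfolding is_min_cut_def separating_def by blast
  have "W1 = W0 \<or> W1 = V - W0"
  proof (rule ccontr)
    assume "\<not> (W1 = W0 \<or> W1 = V - W0)"
    then have "cut_cost E c W1 > cut_cost E c W0" using W0(2) W1 unfolding is_min_cut_def by blast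
    then show False using W0(1) W1 unfolding is_min_cut_def by simp
  qed
  then have cs1: "cutset E W1 = cutset E W0" using cutset_compl[OF g W0V] by auto
  have cc: "cut_cost E c W1 = cut_cost E c W0" using W0(1) W1 unfolding is_min_cut_def by simp
  show ?thesis
  proof (cases "W' = W0 \<or> W' = V - W0")
    case True
    then have "cutset E W' = cutset E W0" using cutset_compl[OF g W0V] by auto
    then show ?thesis using cs1 unfolding W1_def by simp
  next
    case False
    then show ?thesis using W0(2) sep cc unfolding W1_def by auto
  qed
qed

lemma eventually_affine_pos:
  fixes a b :: real assumes "a > 0"
  shows "eventually (\<lambda>t. a + t * b > 0) (at_right 0)"
proof -
  have "((\<lambda>t. a + t * b) \<longlongrightarrow> a + 0 * b) (at_right 0)"
    by (intro tendsto_intros)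
  then show ?thesis using assms order_tendstoD(1) by fastforce
qed

lemma eventually_notin_finite:
  fixes F :: "real set" assumes "finite F"
  shows "eventually (\<lambda>t. t \<notin> F) (at_right 0)"
proof -
  define b where "b = Min (insert 1 (F \<inter> {0<..}))"
  have fin: "finite (insert 1 (F \<inter> {0<..}))" using assms by auto
  have bpos: "b > 0" unfolding b_def using fin by (subst Min_gr_iff) auto
  have "eventually (\<lambda>x. x \<in> {0<..<b}) (at_right 0)" using eventually_at_right_real[OF bpos] .
  then show ?thesis
  proof (rule eventually_mono)
    fix x assume x: "x \<in> {0<..<b}"
    show "x \<notin> F"
    proof
      assume "x \<in> F"
      then have "b \<le> x" unfolding b_def using fin x by (intro Min_le) auto
      then show False using x by auto
    qed
  qed
qed

lemma rep_in: "x \<in> P \<Longrightarrow> rep P \<in> P"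
  unfolding rep_def by (rule someI)

lemma finite_bip: "finite Q \<Longrightarrow> finite (bipartitions Q)"
proof -
  assume f: "finite Q"
  have "bipartitions Q \<subseteq> Pow (Pow Q)"
    unfolding bipartitions_def nontrivial_sub_def by blast
  then show ?thesis using f by (meson finite_Pow_iff finite_subset)
qed

lemma enum_bij: "finite X \<Longrightarrow> bij_betw (enum_set X) {..<card X} X"
proof -
  assume f: "finite X"
  obtain h where "bij_betw h {0..<card X} X" using ex_bij_betw_nat_finite[OF f] by blast
  then have "\<exists>f. bij_betw f {..<card X} X" by (auto simp: atLeast0LessThan)
  then show ?thesis unfolding enum_set_def by (rule someI_ex)
qed

lemma nontrivial_compl: "nontrivial_sub Q S \<Longrightarrow> nontrivial_sub Q (Q - S)"
  unfolding nontrivial_sub_def by blast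

lemma bip_rep_nt:
  assumes "P \<in> bipartitions Q" shows "nontrivial_sub Q (rep P)"
proof -
  obtain S where S: "nontrivial_sub Q S" "P = {S, Q - S}"
    using assms unfolding bipartitions_def by blast
  have "rep P \<in> P" using S(2) by (intro rep_in[of S]) simp
  then show ?thesis using S nontrivial_compl by auto
qed


theorem lemma3p2:
  fixes V :: "'a set" and E :: "'a set set" and c :: "'a set \<Rightarrow> real" and Q :: "'a set"
  assumes "terminal_network V E c Q"
    and "\<forall>S. nontrivial_sub Q S \<longrightarrow> unique_min_cut V E c Q S"
  shows "\<exists>c_hat. (\<forall>e\<in>E. c_hat e > 0) \<and>
           (\<forall>V' E' c'. mimicking V' E' c' V E c_hat Q \<longrightarrow>
              card E' \<ge> matrix_rank (incidence_matrix V E c Q))"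
proof -
  note tn = assms(1) and un = assms(2)
  have g: "graph V E" and cpos: "\<forall>e\<in>E. c e > 0" and QV: "Q \<subseteq> V"
    using tn unfolding terminal_network_def by auto
  have finV: "finite V" using g unfolding graph_def by auto
  have finE: "finite E" using graph_finite_E[OF g] .
  have finQ: "finite Q" using finV QV finite_subset by auto
  define n where "n = card E"
  define en where "en = enum_set E"
  have en: "bij_betw en {..<n} E" unfolding en_def n_def using enum_bij[OF finE] .
  define bip where "bip = bipartitions Q"
  have finbip: "finite bip" unfolding bip_def using finite_bip[OF finQ] .
  define m where "m = card bip"
  define enb where "enb = enum_set bip"
  have enb: "bij_betw enb {..<m} bip" unfolding enb_def m_def using enum_bij[OF finbip] .
  define Sel where "Sel i = rep (enb i)" for i
  have Selnt: "nontrivial_sub Q (Sel i)" if i: "i < m" for i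
  proof -
    have "enb i \<in> bip" using enb i by (auto simp: bij_betw_def)
    then show ?thesis unfolding Sel_def bip_def by (rule bip_rep_nt)
  qed
  define WS where "WS S = (SOME W. is_min_cut V E c Q S W)" for S
  have WSmin: "is_min_cut V E c Q S (WS S)" if "nontrivial_sub Q S" for S
    unfolding WS_def using some_min_cut[OF finV _ QV] that unfolding nontrivial_sub_def by blast
  define A where "A = incidence_matrix V E c Q"
  have Acar: "A \<in> carrier_mat m n"
    unfolding A_def incidence_matrix_def m_def n_def bip_def by simp
  have Aent: "A $$ (i,j) = (if en j \<in> cutset E (WS (Sel i)) then 1 else 0)" if "i < m" "j < n" for i j
    using that unfolding A_def incidence_matrix_def m_def n_def bip_def en_def Sel_def enb_def
      WS_def min_cutset_def by simp

  define r where "r = matrix_rank A"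
  interpret VS: vec_space "TYPE(real)" m .
  have r2: "r = VS.rank A" unfolding r_def matrix_rank_def using Acar by simp
  define B01 where "B01 = (\<lambda>X. vec m (\<lambda>i. if i \<in> X then 1 else (0::real))) ` Pow {..<m}"
  have finB01: "finite B01" unfolding B01_def by simp
  have B01C: "B01 \<subseteq> carrier_vec m" unfolding B01_def by auto
  define Fam where "Fam = {T. T \<subseteq> B01 \<and> card T < r}"
  have finFam: "finite Fam" unfolding Fam_def using finB01 by (auto intro: finite_subset[of _ "Pow B01"])
  have FamC: "\<forall>T\<in>Fam. T \<subseteq> carrier_vec m" unfolding Fam_def using B01C by auto
  define Wset where "Wset = {A *\<^sub>v x | x. x \<in> carrier_vec n}"
  have Wmem: "x \<in> Wset \<longleftrightarrow> (\<exists>a. a \<in> carrier_vec n \<and> x = A *\<^sub>v a)" for x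
    unfolding Wset_def by blast
  have WC: "Wset \<subseteq> carrier_vec m" unfolding Wset_def using Acar by auto
  have W0: "0\<^sub>v m \<in> Wset"
  proof -
    have "A *\<^sub>v 0\<^sub>v n = 0\<^sub>v m" using Acar by (intro eq_vecI) (auto simp: scalar_prod_def)
    then have "0\<^sub>v m = A *\<^sub>v 0\<^sub>v n \<and> 0\<^sub>v n \<in> carrier_vec n" by simp
    then show ?thesis unfolding Wset_def by blast
  qed
  have Wadd: "x + y \<in> Wset" if xy: "x \<in> Wset" "y \<in> Wset" for x y
  proof -
    obtain a b where ab: "a \<in> carrier_vec n" "b \<in> carrier_vec n" "x = A *\<^sub>v a" "y = A *\<^sub>v b"
      using xy Wmem by meson
    have "x + y = A *\<^sub>v (a + b)" using ab Acar by (simp add: mult_add_distrib_mat_vec)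
    then show ?thesis using Wmem ab by (meson add_carrier_vec)
  qed
  have Wsm: "k \<cdot>\<^sub>v x \<in> Wset" if xW: "x \<in> Wset" for k x
  proof -
    obtain a where a: "a \<in> carrier_vec n" "x = A *\<^sub>v a"
      using xW Wmem by meson
    have "k \<cdot>\<^sub>v x = A *\<^sub>v (k \<cdot>\<^sub>v a)" using a Acar by (simp add: mult_mat_vec)
    then show ?thesis using Wmem a by (meson smult_carrier_vec)
  qed
  have colsW: "set (cols A) \<subseteq> Wset"
  proof
    fix x assume "x \<in> set (cols A)"
    then obtain j where j: "j < n" "x = col A j" using Acar by (auto simp: cols_def)
    have "col A j = A *\<^sub>v unit_vec n j"
    proof (rule eq_vecI)
      fix i assume "i < dim_vec (A *\<^sub>v unit_vec n j)"
      then have i: "i < m" using Acar by simp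
      have "(\<Sum>ia = 0..<n. A $$ (i, ia) * (if ia = j then 1 else 0)) = (\<Sum>ia = 0..<n. if ia = j then A $$ (i, ia) else 0)"
        by (rule sum.cong) auto
      also have "\<dots> = A $$ (i, j)" using j by simp
      finally show "col A j $ i = (A *\<^sub>v unit_vec n j) $ i"
        using Acar i j by (simp add: scalar_prod_def unit_vec_def)
    qed (use Acar in simp)
    then show "x \<in> Wset" using Wmem j by (meson unit_vec_carrier)
  qed
  have notsub: "\<forall>T\<in>Fam. \<not> Wset \<subseteq> VS.span T"
  proof (intro ballI notI)
    fix T assume T: "T \<in> Fam" and sub: "Wset \<subseteq> VS.span T"
    have Tc: "T \<subseteq> carrier_vec m" "finite T" using T FamC finB01 unfolding Fam_def
      by (auto intro: finite_subset)
    have "VS.rank A \<le> card T" using VS.rank_le_span_card[OF Acar Tc] colsW sub by blast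
    then show False using T r2 unfolding Fam_def by auto
  qed
  obtain w where w: "w \<in> Wset" "\<forall>T\<in>Fam. w \<notin> VS.span T"
    using VS.avoid_spans[OF infinite_UNIV_char_0 finFam FamC WC W0 Wadd Wsm notsub] by auto
  then obtain d where d: "d \<in> carrier_vec n" "w = A *\<^sub>v d" using Wmem by meson
  have wc: "w \<in> carrier_vec m" using w WC by auto

  define idx where "idx = inv_into {..<n} en"
  define ch where "ch t e = c e + t * d $ idx e" for t e
  have idx_en: "idx (en j) = j" if "j < n" for j
    unfolding idx_def using en that by (simp add: bij_betw_def inv_into_f_f)
  define cv where "cv = vec n (\<lambda>j. c (en j))"
  define p where "p = A *\<^sub>v cv"
  have pc: "p \<in> carrier_vec m" unfolding p_def using Acar by (simp add: carrier_vecI)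
  have Av: "A *\<^sub>v vec n (\<lambda>j. ch t (en j)) = p + t \<cdot>\<^sub>v w" for t
  proof -
    have "vec n (\<lambda>j. ch t (en j)) = cv + t \<cdot>\<^sub>v d"
      using d idx_en by (intro eq_vecI) (auto simp: ch_def cv_def)
    then show ?thesis unfolding p_def d(2) using Acar d(1)
      by (simp add: mult_add_distrib_mat_vec mult_mat_vec cv_def)
  qed
  have cost_formula: "cut_cost E (ch t) X = cut_cost E c X + t * (\<Sum>e\<in>cutset E X. d $ idx e)" for t X
    unfolding cut_cost_def ch_def by (simp add: sum.distrib sum_distrib_left)
  have rowformula: "cut_cost E (ch t) (WS (Sel i)) = (p + t \<cdot>\<^sub>v w) $ i" if i: "i < m" for t i
  proof -
    let ?C = "cutset E (WS (Sel i))"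
    have "(p + t \<cdot>\<^sub>v w) $ i = (A *\<^sub>v vec n (\<lambda>j. ch t (en j))) $ i" using Av by simp
    also have "\<dots> = (\<Sum>j = 0..<n. A $$ (i, j) * ch t (en j))"
      using Acar i by (simp add: scalar_prod_def)
    also have "\<dots> = (\<Sum>j\<in>{..<n}. if en j \<in> ?C then ch t (en j) else 0)"
      using Aent[OF i] by (intro sum.cong) (auto simp: atLeast0LessThan)
    also have "\<dots> = (\<Sum>e\<in>E. if e \<in> ?C then ch t e else 0)"
      using sum.reindex_bij_betw[OF en, of "\<lambda>e. if e \<in> ?C then ch t e else 0"] by simp
    also have "\<dots> = sum (ch t) (E \<inter> ?C)" using finE by (simp add: sum.inter_restrict)
    also have "E \<inter> ?C = ?C" using cutset_sub by blast
    finally show ?thesis unfolding cut_cost_def by simp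
  qed

  define good where "good t = ((\<forall>e\<in>E. ch t e > 0) \<and> (\<forall>T\<in>Fam. p + t \<cdot>\<^sub>v w \<notin> VS.span T) \<and>
     (\<forall>S\<in>Pow Q. \<forall>W'\<in>Pow V. nontrivial_sub Q S \<and> separating V Q S W' \<and> cutset E W' \<noteq> cutset E (WS S)
        \<longrightarrow> cut_cost E (ch t) W' > cut_cost E (ch t) (WS S)))" for t
  have ev1: "eventually (\<lambda>t. \<forall>e\<in>E. ch t e > 0) (at_right 0)"
  proof (rule eventually_ball_finite[OF finE], rule ballI)
    fix e assume "e \<in> E"
    then have "c e > 0" using cpos by auto
    from eventually_affine_pos[OF this, of "d $ idx e"]
    show "eventually (\<lambda>t. ch t e > 0) (at_right 0)" unfolding ch_def .
  qed
  have ev2: "eventually (\<lambda>t. \<forall>T\<in>Fam. p + t \<cdot>\<^sub>v w \<notin> VS.span T) (at_right 0)"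
  proof (rule eventually_ball_finite[OF finFam], rule ballI)
    fix T assume T: "T \<in> Fam"
    have "finite {t. p + t \<cdot>\<^sub>v w \<in> VS.span T}"
      using VS.line_meets_once[of T w p] T FamC w(2) wc pc by auto
    from eventually_notin_finite[OF this]
    show "eventually (\<lambda>t. p + t \<cdot>\<^sub>v w \<notin> VS.span T) (at_right 0)" by simp
  qed
  have ev3: "eventually (\<lambda>t. \<forall>S\<in>Pow Q. \<forall>W'\<in>Pow V. nontrivial_sub Q S \<and> separating V Q S W' \<and> cutset E W' \<noteq> cutset E (WS S)
        \<longrightarrow> cut_cost E (ch t) W' > cut_cost E (ch t) (WS S)) (at_right 0)"
  proof (rule eventually_ball_finite, rule finite_Pow_iff[THEN iffD2, OF finQ], rule ballI,
         rule eventually_ball_finite, rule finite_Pow_iff[THEN iffD2, OF finV], rule ballI)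
    fix S W' assume "S \<in> Pow Q" "W' \<in> Pow V"
    show "eventually (\<lambda>t. nontrivial_sub Q S \<and> separating V Q S W' \<and> cutset E W' \<noteq> cutset E (WS S)
        \<longrightarrow> cut_cost E (ch t) W' > cut_cost E (ch t) (WS S)) (at_right 0)"
    proof (cases "nontrivial_sub Q S \<and> separating V Q S W' \<and> cutset E W' \<noteq> cutset E (WS S)")
      case True
      then have "cut_cost E c W' > cut_cost E c (WS S)"
        using uniq_cut[OF tn _ , of S W'] un unfolding WS_def by auto
      then have "cut_cost E c W' - cut_cost E c (WS S) > 0" by simp
      from eventually_affine_pos[OF this, of "(\<Sum>e\<in>cutset E W'. d $ idx e) - (\<Sum>e\<in>cutset E (WS S). d $ idx e)"]
      show ?thesis
        by (rule eventually_mono) (simp add: cost_formula algebra_simps)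
    next
      case False
      then show ?thesis by (intro always_eventually) blast
    qed
  qed
  have "eventually (\<lambda>t. good t) (at_right 0)"
    unfolding good_def by (rule eventually_conj[OF ev1 eventually_conj[OF ev2 ev3]])
  then obtain t where gt: "good t"
    using eventually_happens trivial_limit_at_right_real by blast
  have mc: "mincut V E (ch t) Q S = cut_cost E (ch t) (WS S)" if S: "nontrivial_sub Q S" for S
  proof (rule antisym)
    have sepS: "separating V Q S (WS S)" using WSmin[OF S] unfolding is_min_cut_def by blast
    show "mincut V E (ch t) Q S \<le> cut_cost E (ch t) (WS S)" using mincut_le[OF finV sepS] .
    have "S \<subseteq> Q" using S unfolding nontrivial_sub_def by blast
    from min_cut_exists[OF finV this QV, of E "ch t"]
    obtain W'' where W'': "is_min_cut V E (ch t) Q S W''" by blast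
    have sep'': "separating V Q S W''" using W'' unfolding is_min_cut_def by blast
    have "cut_cost E (ch t) (WS S) \<le> cut_cost E (ch t) W''"
    proof (cases "cutset E W'' = cutset E (WS S)")
      case True then show ?thesis unfolding cut_cost_def by simp
    next
      case False
      have "S \<in> Pow Q" "W'' \<in> Pow V" using \<open>S \<subseteq> Q\<close> sep'' unfolding separating_def by auto
      have "\<forall>S\<in>Pow Q. \<forall>W'\<in>Pow V. nontrivial_sub Q S \<and> separating V Q S W' \<and> cutset E W' \<noteq> cutset E (WS S)
        \<longrightarrow> cut_cost E (ch t) W' > cut_cost E (ch t) (WS S)" using gt unfolding good_def by blast
      then have "cut_cost E (ch t) W'' > cut_cost E (ch t) (WS S)"
        using \<open>S \<in> Pow Q\<close> \<open>W'' \<in> Pow V\<close> False S sep'' by blast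
      then show ?thesis by simp
    qed
    then show "cut_cost E (ch t) (WS S) \<le> mincut V E (ch t) Q S" using W'' unfolding is_min_cut_def by simp
  qed

  have chpos: "\<forall>e\<in>E. ch t e > 0" using gt unfolding good_def by blast
  have avoid: "\<forall>T\<in>Fam. p + t \<cdot>\<^sub>v w \<notin> VS.span T" using gt unfolding good_def by blast
  show ?thesis
  proof (intro exI[of _ "ch t"] conjI chpos allI impI)
    fix V' :: "('a + nat) set" and E' c'
    assume mim: "mimicking V' E' c' V E (ch t) Q"
    have tn': "terminal_network V' E' c' (Inl ` Q)" and
      mceq: "\<And>S. nontrivial_sub Q S \<Longrightarrow> mincut V' E' c' (Inl ` Q) (Inl ` S) = mincut V E (ch t) Q S"
      using mim unfolding mimicking_def by auto
    have g': "graph V' E'" and QV': "Inl ` Q \<subseteq> V'" using tn' unfolding terminal_network_def by auto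
    have finV': "finite V'" using g' unfolding graph_def by auto
    have finE': "finite E'" using graph_finite_E[OF g'] .
    show "matrix_rank (incidence_matrix V E c Q) \<le> card E'"
    proof (rule ccontr)
      assume "\<not> matrix_rank (incidence_matrix V E c Q) \<le> card E'"
      then have lt: "card E' < r" unfolding r_def A_def by simp
      define WS' where "WS' i = (SOME W. is_min_cut V' E' c' (Inl ` Q) (Inl ` Sel i) W)" for i
      have WS'min: "is_min_cut V' E' c' (Inl ` Q) (Inl ` Sel i) (WS' i)" if i: "i < m" for i
      proof -
        have "Inl ` Sel i \<subseteq> Inl ` Q" using Selnt[OF i] unfolding nontrivial_sub_def by blast
        then show ?thesis unfolding WS'_def using some_min_cut[OF finV' _ QV'] by blast
      qed
      define chi where "chi e = vec m (\<lambda>i. if e \<in> cutset E' (WS' i) then 1 else (0::real))" for e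
      define T where "T = chi ` E'"
      have finT: "finite T" unfolding T_def using finE' by simp
      have TB: "T \<subseteq> B01"
      proof
        fix x assume "x \<in> T"
        then obtain e where e: "x = chi e" unfolding T_def by blast
        have "chi e = (\<lambda>X. vec m (\<lambda>i. if i \<in> X then 1 else (0::real))) {i\<in>{..<m}. e \<in> cutset E' (WS' i)}"
          unfolding chi_def by (intro eq_vecI) auto
        then show "x \<in> B01" unfolding B01_def e by blast
      qed
      have "card T \<le> card E'" unfolding T_def using finE' by (rule card_image_le)
      then have TF: "T \<in> Fam" unfolding Fam_def using TB lt by simp
      have TC: "T \<subseteq> carrier_vec m" using TB B01C by blast
      define a where "a x = sum c' {e\<in>E'. chi e = x}" for x
      have lc: "VS.lincomb a T = p + t \<cdot>\<^sub>v w"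
      proof (rule eq_vecI)
        show "dim_vec (VS.lincomb a T) = dim_vec (p + t \<cdot>\<^sub>v w)"
          using VS.lincomb_dim[OF finT TC] pc wc by simp
        fix i assume "i < dim_vec (p + t \<cdot>\<^sub>v w)"
        then have i: "i < m" using pc wc by simp
        have "VS.lincomb a T $ i = (\<Sum>x\<in>T. a x * x $ i)" using VS.lincomb_index[OF i TC] .
        also have "\<dots> = (\<Sum>x\<in>T. \<Sum>e\<in>{e\<in>E'. chi e = x}. c' e * chi e $ i)"
          unfolding a_def sum_distrib_right by (intro sum.cong) auto
        also have "\<dots> = (\<Sum>e\<in>E'. c' e * chi e $ i)"
          unfolding T_def using sum.image_gen[OF finE', of "\<lambda>e. c' e * chi e $ i" chi] by simp
        also have "\<dots> = (\<Sum>e\<in>E'. if e \<in> cutset E' (WS' i) then c' e else 0)"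
          unfolding chi_def using i by (intro sum.cong) auto
        also have "\<dots> = sum c' (E' \<inter> cutset E' (WS' i))" using finE' by (simp add: sum.inter_restrict)
        also have "E' \<inter> cutset E' (WS' i) = cutset E' (WS' i)" using cutset_sub by blast
        also have "sum c' (cutset E' (WS' i)) = mincut V' E' c' (Inl ` Q) (Inl ` Sel i)"
          using WS'min[OF i] unfolding is_min_cut_def cut_cost_def by simp
        also have "\<dots> = mincut V E (ch t) Q (Sel i)" using mceq[OF Selnt[OF i]] .
        also have "\<dots> = cut_cost E (ch t) (WS (Sel i))" using mc[OF Selnt[OF i]] .
        also have "\<dots> = (p + t \<cdot>\<^sub>v w) $ i" using rowformula[OF i] .
        finally show "VS.lincomb a T $ i = (p + t \<cdot>\<^sub>v w) $ i" .
      qed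
      have "p + t \<cdot>\<^sub>v w \<in> VS.span T"
        using VS.in_spanI[OF lc[symmetric] finT] by simp
      then show False using avoid TF by blast
    qed
  qed
qed
end
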